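(* Let $n\ge 1$, let $X$ be uniformly distributed on $\{0,1\}^n$, and let $Y$ be the output of passing each component of $X$ independently through a binary symmetric channel with crossover probability $\alpha$ (i.e., $Y=X\oplus Z$ with $Z$ having i.i.d. Bernoulli($\alpha$) components independent of $X$). For any balanced Boolean function $f:\{0,1\}^n\to\{0,1\}$ (i.e., $\Pr(f(X)=0)=\tfrac12$) and any $\alpha$ with $\tfrac{1}{2}\left(1-\tfrac{1}{\sqrt{3}}\right)\le\alpha\le\tfrac{1}{2}$, we have \[ I(f(X);Y)\le \frac{\log(e)}{2}(1-2\alpha)^{2}+9\left(1-\frac{\log(e)}{2}\right)(1-2\alpha)^{4}. \]
   Context: $I(\cdot;\cdot)$ denotes mutual information; all logarithms are to base $2$. *)

theory Defs
  imports Complex_Main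
begin

text \<open>The Boolean cube {0,1}^n, represented as Boolean lists of length n
  (False = 0, True = 1).\<close>
definition cube :: "nat \<Rightarrow> bool list set" where
  "cube n = {xs. length xs = n}"

definition hamming :: "bool list \<Rightarrow> bool list \<Rightarrow> nat" where
  "hamming xs ys = card {i. i < length xs \<and> xs ! i \<noteq> ys ! i}"

text \<open>Transition probability of n independent uses of a BSC(alpha):
  P(Y = y | X = x) = alpha^d (1-alpha)^(n-d), d = Hamming distance.\<close>
definition bsc :: "real \<Rightarrow> nat \<Rightarrow> bool list \<Rightarrow> bool list \<Rightarrow> real" where
  "bsc \<alpha> n x y = \<alpha> ^ hamming x y * (1 - \<alpha>) ^ (n - hamming x y)"

definition joint_fY :: "real \<Rightarrow> nat \<Rightarrow> (bool list \<Rightarrow> bool) \<Rightarrow> bool \<Rightarrow> bool list \<Rightarrow> real" where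
  "joint_fY \<alpha> n f b y = (\<Sum>x\<in>{x\<in>cube n. f x = b}. (1 / 2 ^ n) * bsc \<alpha> n x y)"

definition marg_f :: "nat \<Rightarrow> (bool list \<Rightarrow> bool) \<Rightarrow> bool \<Rightarrow> real" where
  "marg_f n f b = real (card {x\<in>cube n. f x = b}) / 2 ^ n"

definition marg_Y :: "real \<Rightarrow> nat \<Rightarrow> bool list \<Rightarrow> real" where
  "marg_Y \<alpha> n y = (\<Sum>x\<in>cube n. (1 / 2 ^ n) * bsc \<alpha> n x y)"

definition MI_fY :: "real \<Rightarrow> nat \<Rightarrow> (bool list \<Rightarrow> bool) \<Rightarrow> real" where
  "MI_fY \<alpha> n f = (\<Sum>b\<in>(UNIV::bool set). \<Sum>y\<in>cube n.
      (let p = joint_fY \<alpha> n f b y in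
        if p = 0 then 0 else p * log 2 (p / (marg_f n f b * marg_Y \<alpha> n y))))"

end

theory Submission
  imports Defs "HOL-Analysis.Analysis" "HOL-Real_Asymp.Real_Asymp"
begin


lemma xlnx_cont: "continuous_on {0..} (\<lambda>z::real. z * ln z)"
proof -
  have "continuous (at z within {0..}) (\<lambda>z::real. z * ln z)" if "z \<ge> 0" for z
  proof (cases "z = 0")
    case True
    have "((\<lambda>z::real. z * ln z) \<longlongrightarrow> 0) (at_right 0)" by real_asymp
    then have "((\<lambda>z::real. z * ln z) \<longlongrightarrow> 0) (at 0 within {0..})"
      by (simp add: at_within_Ici_at_right)
    then show ?thesis using True by (simp add: continuous_within)
  next
    case False
    then have "isCont (\<lambda>z::real. z * ln z) z" using that by (intro continuous_intros) auto
    then show ?thesis using continuous_at_imp_continuous_at_within by blast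
  qed
  then show ?thesis by (simp add: continuous_on_eq_continuous_within)
qed

definition Phi :: "real \<Rightarrow> real" where
  "Phi t = ((1+t) * ln (1+t) + (1-t) * ln (1-t)) / 2"

definition Dfun :: "real \<Rightarrow> real" where
  "Dfun t = Phi t - t^2/2 - (ln 2 - 1/2) * t^4"

definition D1 :: "real \<Rightarrow> real" where
  "D1 t = (ln (1+t) - ln (1-t))/2 - t - 4 * (ln 2 - 1/2) * t^3"

definition D2 :: "real \<Rightarrow> real" where
  "D2 t = 1/(1-t^2) - 1 - 12 * (ln 2 - 1/2) * t^2"

lemma Dfun_deriv: "-1 < t \<Longrightarrow> t < 1 \<Longrightarrow> (Dfun has_real_derivative D1 t) (at t)"
  unfolding Dfun_def Phi_def D1_def
  by (rule derivative_eq_intros refl | simp)+ (simp add: field_simps)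

lemma D1_nz: "-1 < t \<Longrightarrow> t < 1 \<Longrightarrow> 1 + t \<noteq> 0 \<and> 1 - t \<noteq> 0 \<and> 1 - t * t \<noteq> 0 \<and> 1 - t^2 \<noteq> (0::real)"
proof -
  assume a: "-1 < t" "t < 1"
  have "0 < (1-t)*(1+t)" using a by (intro mult_pos_pos) auto
  then show ?thesis using a by (auto simp: algebra_simps power2_eq_square)
qed

lemma D1_deriv: "-1 < t \<Longrightarrow> t < 1 \<Longrightarrow> (D1 has_real_derivative D2 t) (at t)"
  unfolding D2_def D1_def
  by (rule derivative_eq_intros refl | simp)+ (use D1_nz[of t] in \<open>simp add: field_simps power2_eq_square\<close>)

lemma Dfun_cont: "continuous_on {0..1} Dfun"
proof -
  have "continuous_on {0..1} (\<lambda>t::real. (1-t) * ln (1-t))"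
  proof (rule continuous_on_compose2[OF xlnx_cont])
    show "continuous_on {0..1} (\<lambda>t::real. 1 - t)" by (intro continuous_intros)
  qed auto
  moreover have "continuous_on {0..1} (\<lambda>t::real. (1+t) * ln (1+t))"
    by (intro continuous_intros) auto
  ultimately have "continuous_on {0..1} (\<lambda>t::real. (1+t) * ln (1+t) + (1-t) * ln (1-t))"
    by (intro continuous_on_add)
  then have "continuous_on {0..1} (\<lambda>t::real. ((1+t) * ln (1+t) + (1-t) * ln (1-t))/2 - t^2/2 - (ln 2 - 1/2) * t^4)"
    by (intro continuous_on_diff continuous_on_divide continuous_on_mult continuous_on_power continuous_on_id continuous_on_const) auto
  then show ?thesis unfolding Dfun_def Phi_def .
qed


lemma D1_cont: "0 \<le> a \<Longrightarrow> b < 1 \<Longrightarrow> continuous_on {a..b} D1"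
  by (rule continuous_at_imp_continuous_on) (auto intro!: DERIV_isCont[OF D1_deriv])

lemma Dfun_cont': "0 \<le> a \<Longrightarrow> b < 1 \<Longrightarrow> continuous_on {a..b} Dfun"
  by (rule continuous_at_imp_continuous_on) (auto intro!: DERIV_isCont[OF Dfun_deriv])

lemma c_big: "1 < 12 * (ln (2::real) - 1/2)"
  using ln2_ge_two_thirds by simp

definition sK :: real where "sK = sqrt (1 - 1 / (12 * (ln (2::real) - 1/2)))"

lemma sK_bounds: "0 < sK" "sK < 1"
proof -
  have "0 < 1 - 1 / (12 * (ln (2::real) - 1/2))" "1 - 1 / (12 * (ln (2::real) - 1/2)) < 1"
    using c_big by (auto simp: field_simps)
  then show "0 < sK" "sK < 1" unfolding sK_def by auto
qed

lemma D2_sign: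
  assumes "0 \<le> t" "t < 1"
  shows "t \<le> sK \<Longrightarrow> D2 t \<le> 0" and "sK \<le> t \<Longrightarrow> 0 \<le> D2 t"
proof -
  define c where "c = 12 * (ln (2::real) - 1/2)"
  have c1: "1 < c" using c_big c_def by simp
  have p: "0 < 1 - t^2" using assms by (simp add: abs_square_less_1)
  have eq: "D2 t = t^2 * (1/(1-t^2) - c)"
    using p unfolding D2_def c_def by (simp add: field_simps)
  have sq: "sK^2 = 1 - 1/c" using c1 unfolding sK_def c_def by (simp add: field_simps)
  show "t \<le> sK \<Longrightarrow> D2 t \<le> 0"
  proof -
    assume "t \<le> sK"
    then have "t^2 \<le> sK^2" using assms by (intro power_mono) auto
    then have "1/c \<le> 1 - t^2" using sq by simp
    then have "1/(1-t^2) \<le> c" using p c1 by (simp add: field_simps)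
    then show ?thesis unfolding eq by (simp add: mult_nonneg_nonpos)
  qed
  show "sK \<le> t \<Longrightarrow> 0 \<le> D2 t"
  proof -
    assume "sK \<le> t"
    then have "sK^2 \<le> t^2" using sK_bounds by (intro power_mono) auto
    then have "1 - t^2 \<le> 1/c" using sq by simp
    then have "c \<le> 1/(1-t^2)" using p c1 by (simp add: field_simps)
    then show ?thesis unfolding eq by simp
  qed
qed

lemma Dfun0: "Dfun 0 = 0" and D10: "D1 0 = 0" and Dfun1: "Dfun 1 = 0"
  by (simp_all add: Dfun_def Phi_def D1_def)

lemma Dfun_le_A: assumes "0 \<le> t" "t \<le> sK" shows "Dfun t \<le> 0"
proof -
  have D1le: "D1 x \<le> 0" if "0 \<le> x" "x \<le> sK" for x
  proof -
    have "D1 0 \<ge> D1 x"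
    proof (rule DERIV_nonpos_imp_decreasing_open[OF \<open>0 \<le> x\<close>])
      fix y assume "0 < y" "y < x"
      then show "\<exists>d. DERIV D1 y :> d \<and> d \<le> 0"
        using that sK_bounds by (intro exI[of _ "D2 y"]) (auto intro!: D1_deriv D2_sign(1))
    next
      show "continuous_on {0..x} D1" using that sK_bounds by (intro D1_cont) auto
    qed
    then show ?thesis using D10 by simp
  qed
  have "Dfun 0 \<ge> Dfun t"
  proof (rule DERIV_nonpos_imp_decreasing_open[OF \<open>0 \<le> t\<close>])
    fix y assume "0 < y" "y < t"
    then show "\<exists>d. DERIV Dfun y :> d \<and> d \<le> 0"
      using assms sK_bounds by (intro exI[of _ "D1 y"]) (auto intro!: Dfun_deriv D1le)
  next
    show "continuous_on {0..t} Dfun" using assms sK_bounds by (intro Dfun_cont') auto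
  qed
  then show ?thesis using Dfun0 by simp
qed

lemma Dfun_le_B: assumes "sK \<le> t" "t < 1" shows "Dfun t \<le> 0"
proof (rule ccontr)
  assume neg: "\<not> Dfun t \<le> 0"
  have s0: "Dfun sK \<le> 0" using sK_bounds by (intro Dfun_le_A) auto
  with neg have st: "sK < t" using assms by (cases "sK = t") auto
  obtain z where z: "sK < z" "z < t" "Dfun t - Dfun sK = (t - sK) * D1 z"
  proof -
    have "\<And>x. sK \<le> x \<Longrightarrow> x \<le> t \<Longrightarrow> DERIV Dfun x :> D1 x"
      using sK_bounds assms by (intro Dfun_deriv) auto
    from MVT2[OF st this] show ?thesis using that by blast
  qed
  have D1z: "D1 z > 0"
  proof -
    have "(t - sK) * D1 z > 0" using z(3) s0 neg by simp
    then show ?thesis using st by (simp add: zero_less_mult_iff)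
  qed
  have D1u: "D1 u \<ge> D1 z" if "z \<le> u" "u < 1" for u
  proof (rule DERIV_nonneg_imp_increasing_open[OF \<open>z \<le> u\<close>])
    fix y assume "z < y" "y < u"
    then show "\<exists>d. DERIV D1 y :> d \<and> 0 \<le> d"
      using that z sK_bounds by (intro exI[of _ "D2 y"]) (auto intro!: D1_deriv D2_sign(2))
  next
    show "continuous_on {z..u} D1" using that z sK_bounds by (intro D1_cont) auto
  qed
  have "Dfun t \<le> Dfun 1"
  proof (rule DERIV_nonneg_imp_increasing_open[of t 1 Dfun])
    show "t \<le> 1" using assms by simp
  next
    fix y assume "t < y" "y < 1"
    then show "\<exists>d. DERIV Dfun y :> d \<and> 0 \<le> d"
      using z D1z D1u[of y] sK_bounds by (intro exI[of _ "D1 y"]) (auto intro!: Dfun_deriv)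
  next
    show "continuous_on {t..1} Dfun"
      by (rule continuous_on_subset[OF Dfun_cont]) (use assms sK_bounds in auto)
  qed
  then show False using neg Dfun1 by simp
qed

lemma Phi_bound: assumes "\<bar>t\<bar> \<le> 1" shows "Phi t \<le> t^2/2 + (ln 2 - 1/2) * t^4"
proof -
  have "Dfun \<bar>t\<bar> \<le> 0"
  proof (cases "\<bar>t\<bar> \<le> sK")
    case True then show ?thesis by (intro Dfun_le_A) auto
  next
    case False
    show ?thesis
    proof (cases "\<bar>t\<bar> = 1")
      case True then show ?thesis using Dfun1 by simp
    next
      case False2: False
      then show ?thesis using False assms by (intro Dfun_le_B) auto
    qed
  qed
  moreover have "Phi \<bar>t\<bar> = Phi t" unfolding Phi_def by (cases "t \<ge> 0") auto
  moreover have "\<bar>t\<bar>^2 = t^2" "\<bar>t\<bar>^4 = t^4" by (simp_all add: power_even_abs)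
  ultimately show ?thesis unfolding Dfun_def by simp
qed



lemma cube_0: "cube 0 = {[]}" by (auto simp: cube_def)

lemma cube_Suc: "cube (Suc n) = Cons True ` cube n \<union> Cons False ` cube n"
proof -
  have "xs \<in> Cons True ` cube n \<union> Cons False ` cube n" if "length xs = Suc n" for xs
  proof (cases xs)
    case (Cons a l)
    then have "l \<in> cube n" using that by (simp add: cube_def)
    then show ?thesis using Cons by (cases a) auto
  qed (use that in auto)
  then show ?thesis by (auto simp: cube_def)
qed

lemma finite_cube: "finite (cube n)"
  unfolding cube_def using finite_lists_length_eq[of "UNIV::bool set" n] by simp

lemma sum_cube_Suc: "(\<Sum>x\<in>cube (Suc n). F x) = (\<Sum>x\<in>cube n. F (True # x)) + (\<Sum>x\<in>cube n. F (False # x))"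
proof -
  have "(\<Sum>x\<in>cube (Suc n). F x) = (\<Sum>x\<in>Cons True ` cube n. F x) + (\<Sum>x\<in>Cons False ` cube n. F x)"
    unfolding cube_Suc by (rule sum.union_disjoint) (auto simp: finite_cube)
  also have "\<dots> = (\<Sum>x\<in>cube n. F (True # x)) + (\<Sum>x\<in>cube n. F (False # x))"
    by (simp add: sum.reindex)
  finally show ?thesis .
qed

lemma hamming_Nil: "hamming [] [] = 0" by (simp add: hamming_def)

lemma hamming_Cons: "hamming (a # x) (b # y) = (if a = b then 0 else 1) + hamming x y"
proof -
  let ?H = "{i. i < length x \<and> x ! i \<noteq> y ! i}"
  have eq: "{i. i < length (a#x) \<and> (a#x) ! i \<noteq> (b#y) ! i} = (if a = b then {} else {0}) \<union> Suc ` ?H"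
    by (auto simp: nth_Cons' image_iff split: if_splits) (metis Suc_less_eq Suc_pred less_Suc_eq_0_disj)+
  have "card ((if a = b then {} else {0}) \<union> Suc ` ?H) = card (if a = b then {} else {0::nat}) + card (Suc ` ?H)"
    by (rule card_Un_disjoint) auto
  also have "card (Suc ` ?H) = card ?H" by (simp add: card_image)
  finally show ?thesis unfolding hamming_def eq by simp
qed

lemma hamming_le: "length x = length y \<Longrightarrow> hamming x y \<le> length x"
  unfolding hamming_def by (rule order.trans[OF card_mono[of "{..<length x}"]]) auto

lemma bsc_0: "bsc \<alpha> 0 [] [] = 1" by (simp add: bsc_def hamming_Nil)

lemma bsc_Cons:
  assumes "length x = n" "length y = n"
  shows "bsc \<alpha> (Suc n) (a # x) (b # y) = (if a = b then 1 - \<alpha> else \<alpha>) * bsc \<alpha> n x y"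
proof -
  have h: "hamming x y \<le> n" using hamming_le assms by metis
  then have "Suc n - hamming x y = Suc (n - hamming x y)" by simp
  then show ?thesis using h unfolding bsc_def hamming_Cons by auto
qed


definition EE :: "nat \<Rightarrow> (bool list \<Rightarrow> real) \<Rightarrow> real" where
  "EE n h = (\<Sum>x\<in>cube n. h x) / 2^n"

lemma EE_0: "EE 0 h = h []" by (simp add: EE_def cube_0)

lemma EE_Suc: "EE (Suc n) h = (EE n (\<lambda>x. h (True#x)) + EE n (\<lambda>x. h (False#x)))/2"
  unfolding EE_def sum_cube_Suc by (simp add: field_simps)

lemma EE_cong: "(\<And>x. x \<in> cube n \<Longrightarrow> f x = g x) \<Longrightarrow> EE n f = EE n g"
  unfolding EE_def by (metis sum.cong)

lemma EE_add: "EE n (\<lambda>x. f x + g x) = EE n f + EE n g"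
  unfolding EE_def by (simp add: sum.distrib add_divide_distrib)

lemma EE_cmult: "EE n (\<lambda>x. c * f x) = c * EE n f"
  unfolding EE_def by (simp add: sum_distrib_left)

lemma EE_avg: "(EE n f + EE n g)/2 = EE n (\<lambda>x. (f x + g x)/2)"
  unfolding EE_def sum_divide_distrib[symmetric] sum.distrib by (simp add: field_simps)

lemma EE_mono: "(\<And>x. x \<in> cube n \<Longrightarrow> f x \<le> g x) \<Longrightarrow> EE n f \<le> EE n g"
  unfolding EE_def by (intro divide_right_mono sum_mono) auto

lemma EE_nonneg: "(\<And>x. x \<in> cube n \<Longrightarrow> 0 \<le> f x) \<Longrightarrow> 0 \<le> EE n f"
  unfolding EE_def by (intro divide_nonneg_pos sum_nonneg) auto

lemma EE_CS: "(EE n (\<lambda>x. f x * g x))^2 \<le> EE n (\<lambda>x. (f x)^2) * EE n (\<lambda>x. (g x)^2)"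
proof -
  have "(\<Sum>x\<in>cube n. f x * g x)^2 \<le> (\<Sum>x\<in>cube n. (f x)^2) * (\<Sum>x\<in>cube n. (g x)^2)"
    by (rule Cauchy_Schwarz_ineq_sum)
  then have "(\<Sum>x\<in>cube n. f x * g x)^2 / (2^n)^2 \<le> (\<Sum>x\<in>cube n. (f x)^2) * (\<Sum>x\<in>cube n. (g x)^2) / (2^n)^2"
    by (intro divide_right_mono) auto
  then show ?thesis by (simp add: EE_def power_divide power2_eq_square)
qed

definition SS :: "real \<Rightarrow> nat \<Rightarrow> (bool list \<Rightarrow> real) \<Rightarrow> bool list \<Rightarrow> real" where
  "SS \<alpha> n h y = (\<Sum>x\<in>cube n. bsc \<alpha> n x y * h x)"

lemma SS_0: "SS \<alpha> 0 h [] = h []" by (simp add: SS_def cube_0 bsc_0)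

lemma SS_Suc:
  assumes "y \<in> cube n"
  shows "SS \<alpha> (Suc n) h (b # y) = (1-\<alpha>) * SS \<alpha> n (\<lambda>x. h (b#x)) y + \<alpha> * SS \<alpha> n (\<lambda>x. h ((\<not>b)#x)) y"
proof -
  have "SS \<alpha> (Suc n) h (b # y) = (\<Sum>x\<in>cube n. (if True = b then 1 - \<alpha> else \<alpha>) * bsc \<alpha> n x y * h (True # x))
     + (\<Sum>x\<in>cube n. (if False = b then 1 - \<alpha> else \<alpha>) * bsc \<alpha> n x y * h (False # x))"
    unfolding SS_def sum_cube_Suc using assms
    by (intro arg_cong2[where f="(+)"] sum.cong) (auto simp: bsc_Cons cube_def)
  then show ?thesis unfolding SS_def by (cases b) (auto simp: sum_distrib_left mult.assoc)
qed

lemma SS_lin: "SS \<alpha> n (\<lambda>x. a * f x + c * g x) y = a * SS \<alpha> n f y + c * SS \<alpha> n g y"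
  unfolding SS_def by (simp add: sum_distrib_left sum.distrib algebra_simps)

definition hp :: "(bool list \<Rightarrow> real) \<Rightarrow> bool list \<Rightarrow> real" where
  "hp h x = (h (True#x) + h (False#x))/2"
definition hm :: "(bool list \<Rightarrow> real) \<Rightarrow> bool list \<Rightarrow> real" where
  "hm h x = (h (True#x) - h (False#x))/2"

lemma SS_split:
  assumes "y \<in> cube n"
  shows "SS \<alpha> (Suc n) h (True # y) = SS \<alpha> n (hp h) y + (1 - 2*\<alpha>) * SS \<alpha> n (hm h) y"
    and "SS \<alpha> (Suc n) h (False # y) = SS \<alpha> n (hp h) y - (1 - 2*\<alpha>) * SS \<alpha> n (hm h) y"
proof -
  have p: "hp h = (\<lambda>x. (1/2) * h (True#x) + (1/2) * h (False#x))" by (auto simp: hp_def fun_eq_iff)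
  have m: "hm h = (\<lambda>x. (1/2) * h (True#x) + (-1/2) * h (False#x))" by (auto simp: hm_def fun_eq_iff field_simps)
  show "SS \<alpha> (Suc n) h (True # y) = SS \<alpha> n (hp h) y + (1 - 2*\<alpha>) * SS \<alpha> n (hm h) y"
    unfolding SS_Suc[OF assms] p m SS_lin by (simp add: field_simps)
  show "SS \<alpha> (Suc n) h (False # y) = SS \<alpha> n (hp h) y - (1 - 2*\<alpha>) * SS \<alpha> n (hm h) y"
    unfolding SS_Suc[OF assms] p m SS_lin by (simp add: field_simps)
qed

fun NN :: "real \<Rightarrow> nat \<Rightarrow> (bool list \<Rightarrow> real) \<Rightarrow> real" where
  "NN l 0 h = (h [])^2"
| "NN l (Suc n) h = NN l n (hp h) + l * NN l n (hm h)"

lemma NN_nonneg: "0 \<le> l \<Longrightarrow> 0 \<le> NN l n h"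
  by (induction n arbitrary: h) auto

lemma EE_Suc_avg: "EE (Suc n) h = EE n (\<lambda>x. (h (True#x) + h (False#x))/2)"
  by (simp add: EE_Suc EE_avg)

lemma sq_avg: "(((a::real) + r*b)^2 + (a - r*b)^2)/2 = a^2 + r^2*b^2"
  by (simp add: power2_eq_square field_simps)

lemma q_avg: "(((a::real) + r*b)^4 + (a - r*b)^4)/2 = a^4 + 6*r^2*(a^2*b^2) + r^4*b^4"
  by (simp add: power4_eq_xxxx power2_eq_square field_simps)

lemma pow22: "((x::real)^2)^2 = x^4"
  by (simp add: power_mult[symmetric])

lemma r4_le: "(r::real)^4 * c^4 \<le> (3*r^2)^2 * c^4"
proof -
  have "(3*r^2)^2 = 9 * r^4" by (simp add: power_mult_distrib power_mult[symmetric])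
  moreover have "0 \<le> r^4 * c^4" by simp
  ultimately show ?thesis by simp
qed

lemma L2: "EE n (\<lambda>y. (SS \<alpha> n h y)^2) = NN ((1-2*\<alpha>)^2) n h"
proof (induction n arbitrary: h)
  case 0
  then show ?case by (simp add: EE_0 SS_0)
next
  case (Suc n)
  let ?A = "SS \<alpha> n (hp h)" and ?B = "SS \<alpha> n (hm h)" and ?r = "1 - 2*\<alpha>"
  have "EE (Suc n) (\<lambda>y. (SS \<alpha> (Suc n) h y)^2) = EE n (\<lambda>x. (?A x)^2 + ?r^2 * (?B x)^2)"
    unfolding EE_Suc_avg
  proof (rule EE_cong)
    fix x assume x: "x \<in> cube n"
    show "((SS \<alpha> (Suc n) h (True # x))^2 + (SS \<alpha> (Suc n) h (False # x))^2) / 2 = (?A x)^2 + ?r^2 * (?B x)^2"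
      unfolding SS_split[OF x] by (rule sq_avg)
  qed
  also have "\<dots> = NN (?r^2) (Suc n) h"
    by (simp add: EE_add EE_cmult Suc.IH)
  finally show ?case .
qed

lemma L4: "EE n (\<lambda>y. (SS \<alpha> n h y)^4) \<le> (NN (3*(1-2*\<alpha>)^2) n h)^2"
proof (induction n arbitrary: h)
  case 0
  then show ?case by (simp add: EE_0 SS_0 power_mult[symmetric])
next
  case (Suc n)
  let ?A = "SS \<alpha> n (hp h)" and ?B = "SS \<alpha> n (hm h)" and ?r = "1 - 2*\<alpha>"
  let ?l = "3*(1-2*\<alpha>)^2"
  define N0 where "N0 = NN ?l n (hp h)"
  define N1 where "N1 = NN ?l n (hm h)"
  have l0: "0 \<le> ?l" by simp
  have N0: "0 \<le> N0" "EE n (\<lambda>y. (?A y)^4) \<le> N0^2" unfolding N0_def using Suc.IH NN_nonneg[OF l0] by auto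
  have N1: "0 \<le> N1" "EE n (\<lambda>y. (?B y)^4) \<le> N1^2" unfolding N1_def using Suc.IH NN_nonneg[OF l0] by auto
  have cs: "EE n (\<lambda>y. (?A y)^2 * (?B y)^2) \<le> N0 * N1"
  proof -
    have "(EE n (\<lambda>y. (?A y)^2 * (?B y)^2))^2 \<le> EE n (\<lambda>y. ((?A y)^2)^2) * EE n (\<lambda>y. ((?B y)^2)^2)"
      by (rule EE_CS)
    also have "\<dots> = EE n (\<lambda>y. (?A y)^4) * EE n (\<lambda>y. (?B y)^4)"
      by (simp only: pow22)
    also have "\<dots> \<le> N0^2 * N1^2"
    proof (rule mult_mono[OF N0(2) N1(2)])
      show "0 \<le> N0^2" by simp
      show "0 \<le> EE n (\<lambda>y. (?B y)^4)" by (rule EE_nonneg) simp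
    qed
    also have "\<dots> = (N0 * N1)^2" by (simp add: power_mult_distrib)
    finally have "(EE n (\<lambda>y. (?A y)^2 * (?B y)^2))^2 \<le> (N0 * N1)^2" .
    then show ?thesis by (rule power2_le_imp_le) (use N0(1) N1(1) in simp)
  qed
  have "EE (Suc n) (\<lambda>y. (SS \<alpha> (Suc n) h y)^4) = EE n (\<lambda>x. (?A x)^4 + 6 * ?r^2 * ((?A x)^2 * (?B x)^2) + ?r^4 * (?B x)^4)"
    unfolding EE_Suc_avg
  proof (rule EE_cong)
    fix x assume x: "x \<in> cube n"
    show "((SS \<alpha> (Suc n) h (True # x))^4 + (SS \<alpha> (Suc n) h (False # x))^4) / 2 = (?A x)^4 + 6 * ?r^2 * ((?A x)^2 * (?B x)^2) + ?r^4 * (?B x)^4"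
      unfolding SS_split[OF x] by (rule q_avg)
  qed
  also have "\<dots> \<le> EE n (\<lambda>x. (?A x)^4 + (2 * ?l) * ((?A x)^2 * (?B x)^2) + ?l^2 * (?B x)^4)"
  proof (rule EE_mono)
    fix x
    have "?r^4 * (?B x)^4 \<le> ?l^2 * (?B x)^4"
      by (rule r4_le)
    then show "(?A x)^4 + 6 * ?r^2 * ((?A x)^2 * (?B x)^2) + ?r^4 * (?B x)^4 \<le>
      (?A x)^4 + (2 * ?l) * ((?A x)^2 * (?B x)^2) + ?l^2 * (?B x)^4" by simp
  qed
  also have "\<dots> = EE n (\<lambda>x. (?A x)^4) + (2 * ?l) * EE n (\<lambda>x. (?A x)^2 * (?B x)^2) + ?l^2 * EE n (\<lambda>x. (?B x)^4)"
    by (simp add: EE_add EE_cmult)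
  also have "\<dots> \<le> N0^2 + (2 * ?l) * (N0 * N1) + ?l^2 * N1^2"
  proof -
    have "(2 * ?l) * EE n (\<lambda>x. (?A x)^2 * (?B x)^2) \<le> (2 * ?l) * (N0 * N1)"
      by (rule mult_left_mono[OF cs]) simp
    moreover have "?l^2 * EE n (\<lambda>x. (?B x)^4) \<le> ?l^2 * N1^2"
      by (rule mult_left_mono[OF N1(2)]) simp
    ultimately show ?thesis using N0(2) by linarith
  qed
  also have "\<dots> = (N0 + ?l * N1)^2" by (simp add: power2_eq_square algebra_simps)
  also have "\<dots> = (NN ?l (Suc n) h)^2" by (simp add: N0_def N1_def)
  finally show ?case .
qed

lemma EE_sq_Suc: "EE (Suc n) (\<lambda>x. (h x)^2) = EE n (\<lambda>x. (hp h x)^2) + EE n (\<lambda>x. (hm h x)^2)"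
  unfolding EE_Suc_avg EE_add[symmetric]
  by (rule EE_cong) (simp add: hp_def hm_def power2_eq_square field_simps)

lemma NN_le_EE: "0 \<le> l \<Longrightarrow> l \<le> 1 \<Longrightarrow> NN l n h \<le> EE n (\<lambda>x. (h x)^2)"
proof (induction n arbitrary: h)
  case 0
  then show ?case by (simp add: EE_0)
next
  case (Suc n)
  have "l * NN l n (hm h) \<le> NN l n (hm h)"
    using Suc.prems NN_nonneg[of l n "hm h"] by (simp add: mult_left_le_one_le)
  then show ?case using Suc.IH[of "hp h"] Suc.IH[of "hm h"] Suc.prems by (simp add: EE_sq_Suc)
qed

lemma NN_mean0: "0 \<le> l \<Longrightarrow> l \<le> 1 \<Longrightarrow> EE n h = 0 \<Longrightarrow> NN l n h \<le> l * EE n (\<lambda>x. (h x)^2)"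
proof (induction n arbitrary: h)
  case 0
  then show ?case by (simp add: EE_0)
next
  case (Suc n)
  have "EE n (hp h) = 0" using Suc.prems by (simp add: EE_Suc_avg hp_def[abs_def])
  then have a: "NN l n (hp h) \<le> l * EE n (\<lambda>x. (hp h x)^2)" using Suc.IH Suc.prems by auto
  have b: "l * NN l n (hm h) \<le> l * EE n (\<lambda>x. (hm h x)^2)"
    using Suc.prems NN_le_EE by (intro mult_left_mono) auto
  show ?case using a b by (simp add: EE_sq_Suc algebra_simps)
qed



lemma comb_aux: "(K::real)*(a/2*x)/l + K*(b/2*y)/l = K*((a*x+b*y)/2)/l"
  by (cases "l = 0") (simp_all add: field_simps)

lemma EE_diff: "EE n (\<lambda>x. f x - g x) = EE n f - EE n g"
  unfolding EE_def by (simp add: sum_subtractf diff_divide_distrib)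

lemma EE_one: "EE n (\<lambda>_. 1) = 1"
  by (induction n) (simp_all add: EE_0 EE_Suc)

lemma SS_one: "y \<in> cube n \<Longrightarrow> SS \<alpha> n (\<lambda>_. 1) y = 1"
proof (induction n arbitrary: y)
  case 0 then show ?case by (simp add: cube_0 SS_0)
next
  case (Suc n)
  then obtain b y' where y: "y = b # y'" "y' \<in> cube n" unfolding cube_Suc by auto
  then show ?case using Suc.IH by (simp add: SS_Suc)
qed

lemma bsc_nonneg: "0 \<le> \<alpha> \<Longrightarrow> \<alpha> \<le> 1 \<Longrightarrow> 0 \<le> bsc \<alpha> n x y"
  unfolding bsc_def by simp

lemma term_eq:
  fixes K a :: real
  assumes "0 < K" "0 \<le> a"
  shows "(let p = K * a in if p = 0 then 0 else p * log 2 (p / (1/2 * K))) = K * (a * ln (2*a)) / ln 2"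
proof (cases "a = 0")
  case True then show ?thesis by simp
next
  case False
  then have "K * a \<noteq> 0" "K * a / (1/2 * K) = 2 * a" using assms by auto
  then show ?thesis by (simp add: Let_def log_def mult.commute)
qed

theorem theorem1:
  fixes n :: nat and \<alpha> :: real and f :: "bool list \<Rightarrow> bool"
  assumes "n \<ge> 1"
    and "marg_f n f False = 1 / 2"
    and "(1 - 1 / sqrt 3) / 2 \<le> \<alpha>" and "\<alpha> \<le> 1 / 2"
  shows "MI_fY \<alpha> n f \<le> log 2 (exp 1) / 2 * (1 - 2 * \<alpha>) ^ 2
           + 9 * (1 - log 2 (exp 1) / 2) * (1 - 2 * \<alpha>) ^ 4"
proof -
  define r where "r = 1 - 2 * \<alpha>"
  have s3: "1 < sqrt (3::real)" by simp
  have a0: "0 \<le> \<alpha>" using assms(3) s3 by (smt (verit) divide_le_eq_1_pos divide_nonneg_nonneg)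
  have a1: "\<alpha> \<le> 1" using assms(4) by simp
  have r0: "0 \<le> r" using assms(4) r_def by simp
  have rle: "r \<le> 1 / sqrt 3" using assms(3) r_def by simp
  have "r^2 \<le> (1 / sqrt 3)^2" using r0 rle by (intro power_mono) auto
  then have r2: "r^2 \<le> 1/3" by (simp add: power_divide)
  define g where "g = (\<lambda>x. if f x then 1 else -1::real)"
  define iT where "iT = (\<lambda>x. if f x then 1 else 0::real)"
  define iF where "iF = (\<lambda>x. if \<not> f x then 1 else 0::real)"
  have cT: "(\<Sum>x\<in>cube n. iT x) = real (card {x\<in>cube n. f x = True})"
    using sum.inter_filter[of "cube n" "\<lambda>_. 1::real" "\<lambda>x. f x = True"] finite_cube
    unfolding iT_def by simp
  have cF: "(\<Sum>x\<in>cube n. iF x) = real (card {x\<in>cube n. f x = False})"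
    using sum.inter_filter[of "cube n" "\<lambda>_. 1::real" "\<lambda>x. f x = False"] finite_cube
    unfolding iF_def by simp
  have mT: "marg_f n f True = EE n iT" and mF: "marg_f n f False = EE n iF"
    unfolding marg_f_def EE_def cT cF by simp_all
  have "EE n iT + EE n iF = 1"
  proof -
    have "EE n (\<lambda>x. iT x + iF x) = EE n (\<lambda>_. 1)" by (rule EE_cong) (simp add: iT_def iF_def)
    then show ?thesis using EE_one[of n] by (simp add: EE_add)
  qed
  then have mT2: "marg_f n f True = 1/2" using mT mF assms(2) by simp
  have Eg: "EE n g = 0"
  proof -
    have "EE n g = EE n (\<lambda>x. 1 * iT x + (-1) * iF x)" by (rule EE_cong) (simp add: g_def iT_def iF_def)
    also have "\<dots> = EE n iT - EE n iF" by (simp add: EE_diff)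
    finally show ?thesis using mT mF mT2 assms(2) by simp
  qed
  have Eg2: "EE n (\<lambda>x. (g x)^2) = 1"
  proof -
    have "EE n (\<lambda>x. (g x)^2) = EE n (\<lambda>_. 1)" by (rule EE_cong) (simp add: g_def)
    then show ?thesis using EE_one[of n] by simp
  qed
  define t where "t = SS \<alpha> n g"
  have E2: "EE n (\<lambda>y. (t y)^2) \<le> r^2"
  proof -
    have "EE n (\<lambda>y. (t y)^2) = NN (r^2) n g" unfolding t_def r_def by (rule L2)
    also have "\<dots> \<le> r^2 * EE n (\<lambda>x. (g x)^2)" using r2 Eg by (intro NN_mean0) auto
    finally show ?thesis using Eg2 by simp
  qed
  have E4: "EE n (\<lambda>y. (t y)^4) \<le> 9 * r^4"
  proof -
    have "EE n (\<lambda>y. (t y)^4) \<le> (NN (3*r^2) n g)^2" unfolding t_def r_def by (rule L4)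
    also have "NN (3*r^2) n g \<le> 3*r^2 * EE n (\<lambda>x. (g x)^2)" using r2 Eg by (intro NN_mean0) auto
    then have "(NN (3*r^2) n g)^2 \<le> (3*r^2)^2" using Eg2 NN_nonneg[of "3*r^2" n g]
      by (intro power_mono) auto
    also have "(3*r^2)^2 = 9 * r^4" by (simp add: power_mult_distrib power_mult[symmetric])
    finally show ?thesis .
  qed
  define K :: real where "K = 1 / 2^n"
  have K0: "0 < K" unfolding K_def by simp
  have PT: "(\<Sum>x\<in>{x\<in>cube n. f x = True}. bsc \<alpha> n x y) = SS \<alpha> n iT y" for y
    unfolding SS_def iT_def using finite_cube by (simp add: sum.inter_filter if_distrib cong: if_cong)
  have PF: "(\<Sum>x\<in>{x\<in>cube n. f x = False}. bsc \<alpha> n x y) = SS \<alpha> n iF y" for y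
    unfolding SS_def iF_def using finite_cube by (simp add: sum.inter_filter if_distrib cong: if_cong)
  have ST: "SS \<alpha> n iT y = (1 + t y)/2" and SF: "SS \<alpha> n iF y = (1 - t y)/2" if y: "y \<in> cube n" for y
  proof -
    have "iT = (\<lambda>x. (1/2) * 1 + (1/2) * g x)" "iF = (\<lambda>x. (1/2) * 1 + (-1/2) * g x)"
      by (auto simp: iT_def iF_def g_def fun_eq_iff)
    then show "SS \<alpha> n iT y = (1 + t y)/2" "SS \<alpha> n iF y = (1 - t y)/2"
      unfolding t_def using SS_lin[of \<alpha> n "1/2" "\<lambda>_. 1" "1/2" g y] SS_lin[of \<alpha> n "1/2" "\<lambda>_. 1" "-1/2" g y]
        SS_one[OF y, of \<alpha>] by simp_all
  qed
  have Snn: "0 \<le> SS \<alpha> n h y" if "\<And>x. 0 \<le> h x" for h y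
    unfolding SS_def using bsc_nonneg[OF a0 a1] that by (intro sum_nonneg mult_nonneg_nonneg)
  have tb: "\<bar>t y\<bar> \<le> 1" if y: "y \<in> cube n" for y
  proof -
    have "0 \<le> SS \<alpha> n iT y" "0 \<le> SS \<alpha> n iF y" by (rule Snn, simp add: iT_def iF_def)+
    then show ?thesis using ST[OF y] SF[OF y] by (simp add: abs_le_iff)
  qed
  have jT: "joint_fY \<alpha> n f True y = K * ((1 + t y)/2)" and jF: "joint_fY \<alpha> n f False y = K * ((1 - t y)/2)"
    if y: "y \<in> cube n" for y
    unfolding joint_fY_def K_def sum_distrib_left[symmetric] PT PF ST[OF y] SF[OF y] by simp_all
  have mY: "marg_Y \<alpha> n y = K" if y: "y \<in> cube n" for y
    unfolding marg_Y_def K_def sum_distrib_left[symmetric] using SS_one[OF y, of \<alpha>] by (simp add: SS_def)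
  have MI: "MI_fY \<alpha> n f = EE n (\<lambda>y. Phi (t y) / ln 2)"
  proof -
    have "MI_fY \<alpha> n f = (\<Sum>y\<in>cube n. K * (((1 + t y)/2) * ln (2*((1 + t y)/2))) / ln 2)
       + (\<Sum>y\<in>cube n. K * (((1 - t y)/2) * ln (2*((1 - t y)/2))) / ln 2)"
    proof -
      have sb: "\<And>F::bool\<Rightarrow>real. (\<Sum>b\<in>UNIV. F b) = F True + F False" by (simp add: UNIV_bool)
      have tT: "(let p = joint_fY \<alpha> n f True y in if p = 0 then 0 else p * log 2 (p / (marg_f n f True * marg_Y \<alpha> n y)))
          = K * (((1 + t y)/2) * ln (2*((1 + t y)/2))) / ln 2" if y: "y \<in> cube n" for y
      proof -
        have "0 \<le> (1 + t y)/2" using tb[OF y] by (simp add: abs_le_iff)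
        then show ?thesis unfolding jT[OF y] mT2 mY[OF y] by (rule term_eq[OF K0])
      qed
      have tF: "(let p = joint_fY \<alpha> n f False y in if p = 0 then 0 else p * log 2 (p / (marg_f n f False * marg_Y \<alpha> n y)))
          = K * (((1 - t y)/2) * ln (2*((1 - t y)/2))) / ln 2" if y: "y \<in> cube n" for y
      proof -
        have "0 \<le> (1 - t y)/2" using tb[OF y] by (simp add: abs_le_iff)
        then show ?thesis unfolding jF[OF y] assms(2) mY[OF y] by (rule term_eq[OF K0])
      qed
      show ?thesis unfolding MI_fY_def sb
        by (intro arg_cong2[where f="(+)"] sum.cong refl) (simp_all add: tT tF)
    qed
    also have "\<dots> = (\<Sum>y\<in>cube n. K * Phi (t y) / ln 2)"
    proof -
      have h: "2*((1 + u)/2) = 1 + u" "2*((1 - u)/2) = 1 - u" for u :: real by simp_all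
      show ?thesis unfolding sum.distrib[symmetric] h Phi_def comb_aux ..
    qed
    also have "\<dots> = EE n (\<lambda>y. Phi (t y) / ln 2)"
      unfolding EE_def K_def by (simp add: sum_divide_distrib mult.commute)
    finally show ?thesis .
  qed
  define L where "L = log 2 (exp 1)"
  have L: "L = 1 / ln 2" unfolding L_def by (simp add: log_def)
  have ln2: "1/2 < ln (2::real)" using ln2_ge_two_thirds by simp
  have "EE n (\<lambda>y. Phi (t y) / ln 2) \<le> EE n (\<lambda>y. (L/2) * (t y)^2 + (1 - L/2) * (t y)^4)"
  proof (rule EE_mono)
    fix y assume y: "y \<in> cube n"
    have "Phi (t y) \<le> (t y)^2/2 + (ln 2 - 1/2) * (t y)^4" by (rule Phi_bound[OF tb[OF y]])
    then have "Phi (t y) / ln 2 \<le> ((t y)^2/2 + (ln 2 - 1/2) * (t y)^4) / ln 2"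
      using ln2 by (intro divide_right_mono) auto
    also have "\<dots> = (L/2) * (t y)^2 + (1 - L/2) * (t y)^4" unfolding L using ln2 by (simp add: field_simps)
    finally show "Phi (t y) / ln 2 \<le> (L/2) * (t y)^2 + (1 - L/2) * (t y)^4" .
  qed
  also have "\<dots> = (L/2) * EE n (\<lambda>y. (t y)^2) + (1 - L/2) * EE n (\<lambda>y. (t y)^4)"
    by (simp only: EE_add EE_cmult)
  also have "\<dots> \<le> (L/2) * r^2 + (1 - L/2) * (9 * r^4)"
  proof (intro add_mono mult_left_mono E2 E4)
    show "0 \<le> L/2" unfolding L using ln2 by simp
    have "L < 2" unfolding L using ln2 by (simp add: field_simps)
    then show "0 \<le> 1 - L/2" by simp
  qed
  finally show ?thesis unfolding MI r_def L_def by (simp add: algebra_simps)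
qed


end
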